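(* In the standing setup, with the convention $x_\infty:=x_{\infty+1}:=0$, we have for all $1\le m<n\le\infty$: $$0\le\big\langle x_{m+1}-x_{n+1},\,(x_m-x_{m+1})-(x_n-x_{n+1})\big\rangle.$$
   Context: Standing setup. $X$ is a real Hilbert space. $u\colon[0,\infty)\to X$ satisfies $\langle u(s),u(t)\rangle=\exp(-(s-t)^2)$ for all $s,t\ge0$. $(d_n)_{n\ge1}$ satisfies: $d_n>0$, $\sum_k d_k^2<\infty$, $t_n:=\sum_{k=1}^{n-1}d_k\to+\infty$, $d_1\le1/8$, $d_{n+1}\le d_n/(1+64d_n^2)$ for all $n$. $\rho_1:=1$, $\rho_{n+1}:=\rho_n\exp(-d_n^2)$, $x_n:=\rho_nu(t_n)$. *)

theory Defs
  imports "HOL-Analysis.Analysis" "HOL-Library.Extended_Nat"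
begin

text \<open>Sequences are indexed from 1; index 0 is a dummy value.\<close>

definition tseq :: "(nat \<Rightarrow> real) \<Rightarrow> nat \<Rightarrow> real" where
  "tseq d n = (\<Sum>k\<in>{1..<n}. d k)"

fun rho :: "(nat \<Rightarrow> real) \<Rightarrow> nat \<Rightarrow> real" where
  "rho d 0 = 1"
| "rho d (Suc 0) = 1"
| "rho d (Suc (Suc n)) = rho d (Suc n) * exp (- (d (Suc n))\<^sup>2)"

text \<open>x_n = rho_n u(t_n) for finite n, and x_\<infinity> = 0 (note \<infinity>+1 = \<infinity> in enat).\<close>
definition xseq :: "(real \<Rightarrow> 'a::real_vector) \<Rightarrow> (nat \<Rightarrow> real) \<Rightarrow> enat \<Rightarrow> 'a" where
  "xseq u d m = (case m of enat n \<Rightarrow> rho d n *\<^sub>R u (tseq d n) | \<infinity> \<Rightarrow> 0)"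

end

theory Submission
  imports Defs
begin

lemma key_real:
  fixes a b :: real
  assumes a0: "0 \<le> a" and b0: "0 \<le> b" and ab: "a * (1 + 32 * b) \<le> b"
  shows "1 \<le> exp (- a) * (2 - exp (- b))"
proof -
  have h1: "1 - a \<le> exp (- a)" using exp_ge_add_one_self[of "-a"] by simp
  have ale: "a \<le> b / (1 + 32 * b)" using ab b0 by (simp add: field_simps)
  have h2: "(1 + 31 * b) / (1 + 32 * b) \<le> 1 - a"
    using ale b0 by (simp add: field_simps)
  have eb: "1 + b \<le> exp b" using exp_ge_add_one_self[of b] by simp
  have h3: "exp (- b) \<le> 1 / (1 + b)"
    using eb b0 by (simp add: exp_minus field_simps)
  have h4: "(1 + 2 * b) / (1 + b) \<le> 2 - exp (- b)"
    using h3 b0 by (simp add: field_simps)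
  have "(1 + 31 * b) / (1 + 32 * b) * ((1 + 2 * b) / (1 + b)) \<le> exp (- a) * (2 - exp (- b))"
    apply (rule mult_mono)
    using h1 h2 h4 b0 by auto
  moreover have "1 \<le> (1 + 31 * b) / (1 + 32 * b) * ((1 + 2 * b) / (1 + b))"
  proof -
    have e: "(1 + 31 * b) * (1 + 2 * b) - (1 + 32 * b) * (1 + b) = 30 * (b * b)"
      by (simp add: algebra_simps)
    have "0 \<le> 30 * (b * b)" using b0 by simp
    then have "(1 + 32 * b) * (1 + b) \<le> (1 + 31 * b) * (1 + 2 * b)" using e by linarith
    moreover have "(1 + 31 * b) / (1 + 32 * b) * ((1 + 2 * b) / (1 + b))
       = ((1 + 31 * b) * (1 + 2 * b)) / ((1 + 32 * b) * (1 + b))" by simp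
    moreover have "0 < (1 + 32 * b) * (1 + b)" using b0 by simp
    ultimately show ?thesis by (simp add: le_divide_eq_1)
  qed
  ultimately show ?thesis by linarith
qed

lemma exp2: "x + y = z \<Longrightarrow> exp x * exp y = exp (z::real)"
  by (simp add: mult_exp_exp)

lemma exp3: "x + y + z = w + v \<Longrightarrow> exp x * exp y * exp z = exp w * exp (v::real)"
  by (simp add: mult_exp_exp)

lemma exp3': "x + y = w + v \<Longrightarrow> exp x * exp y = exp w * exp (v::real)"
  by (simp add: mult_exp_exp)

lemma tseq_Suc: "1 \<le> k \<Longrightarrow> tseq d (Suc k) = tseq d k + d k"
  unfolding tseq_def by (simp add: sum.atLeastLessThan_Suc)

lemma rho_Suc: "1 \<le> k \<Longrightarrow> rho d (Suc k) = rho d k * exp (- (d k)\<^sup>2)"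
  by (cases k) auto

lemma rho_pos: "0 < rho d k"
  by (induction d k rule: rho.induct) auto

lemma tseq_nonneg:
  assumes "\<And>k. k \<ge> 1 \<Longrightarrow> d k > 0"
  shows "0 \<le> tseq d k"
  unfolding tseq_def using assms by (intro sum_nonneg) (auto simp: less_imp_le)

lemma tseq_mono:
  assumes "\<And>k. k \<ge> 1 \<Longrightarrow> d k > 0" "i \<le> j"
  shows "tseq d i \<le> tseq d j"
  unfolding tseq_def using assms by (intro sum_mono2) (auto simp: less_imp_le)

lemma recip_bound:
  assumes d_pos: "\<And>k. k \<ge> 1 \<Longrightarrow> d k > 0"
    and d_rec: "\<And>k. k \<ge> 1 \<Longrightarrow> d (k + 1) \<le> d k / (1 + 64 * (d k)\<^sup>2)"
    and i: "1 \<le> i"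
  shows "i \<le> j \<Longrightarrow> 1 / d i + 64 * (tseq d j - tseq d i) \<le> 1 / d j"
proof (induction j)
  case 0 then show ?case using i by simp
next
  case (Suc j)
  show ?case
  proof (cases "i = Suc j")
    case True then show ?thesis by simp
  next
    case False
    then have ij: "i \<le> j" using Suc.prems by simp
    have j1: "1 \<le> j" using ij i by simp
    have dj: "d j > 0" using d_pos j1 by simp
    have dj1: "d (Suc j) > 0" using d_pos j1 by simp
    have r: "d (Suc j) \<le> d j / (1 + 64 * (d j)\<^sup>2)" using d_rec[OF j1] by simp
    have pos: "0 < 1 + 64 * (d j)\<^sup>2" by (simp add: add_pos_nonneg)
    have r2: "d (Suc j) * (1 + 64 * (d j)\<^sup>2) \<le> d j"
      using r pos by (simp add: pos_le_divide_eq)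
    have "(1 + 64 * (d j)\<^sup>2) / d j \<le> 1 / d (Suc j)"
      using r2 dj dj1 by (simp add: divide_simps mult.commute)
    moreover have "(1 + 64 * (d j)\<^sup>2) / d j = 1 / d j + 64 * d j"
      using dj by (simp add: field_simps power2_eq_square)
    ultimately show ?thesis using Suc.IH[OF ij] tseq_Suc[OF j1, of d] by simp
  qed
qed

theorem lemma6p3:
  fixes u :: "real \<Rightarrow> 'a::{real_inner, complete_space}"
    and d :: "nat \<Rightarrow> real"
    and m n :: enat
  assumes u_inner: "\<And>s t. s \<ge> 0 \<Longrightarrow> t \<ge> 0 \<Longrightarrow> inner (u s) (u t) = exp (- (s - t)\<^sup>2)"
    and d_pos: "\<And>k. k \<ge> 1 \<Longrightarrow> d k > 0"
    and d_sq_summable: "summable (\<lambda>k. (d k)\<^sup>2)"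
    and t_infty: "filterlim (tseq d) at_top sequentially"
    and d1: "d 1 \<le> 1/8"
    and d_rec: "\<And>k. k \<ge> 1 \<Longrightarrow> d (k + 1) \<le> d k / (1 + 64 * (d k)\<^sup>2)"
    and mn: "1 \<le> m" "m < n"
  shows "0 \<le> inner (xseq u d (m + 1) - xseq u d (n + 1))
                    ((xseq u d m - xseq u d (m + 1)) - (xseq u d n - xseq u d (n + 1)))"
proof -
  define X where "X k = rho d k *\<^sub>R u (tseq d k)" for k
  have Xin: "inner (X k) (X l) = rho d k * rho d l * exp (- (tseq d k - tseq d l)\<^sup>2)" for k l
    unfolding X_def using u_inner tseq_nonneg[OF d_pos] by simp
  obtain i where mi: "m = enat i" using mn(2) by (cases m) auto
  have i1: "1 \<le> i" using mn(1) mi by (simp add: one_enat_def)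
  have xm: "xseq u d m = X i" "xseq u d (m + 1) = X (Suc i)"
    unfolding xseq_def X_def mi by (simp_all add: one_enat_def)
  have rS: "rho d (Suc i) = rho d i * exp (- (d i)\<^sup>2)" using rho_Suc[OF i1] .
  have tS: "tseq d (Suc i) = tseq d i + d i" using tseq_Suc[OF i1] .
  have ba: "inner (X (Suc i)) (X i) = inner (X (Suc i)) (X (Suc i))"
    unfolding Xin rS tS by (simp add: power2_eq_square mult_exp_exp[symmetric] del: mult_exp_exp)
  show ?thesis
  proof (cases n)
    case infinity
    then have "xseq u d n = 0" "xseq u d (n + 1) = 0" by (simp_all add: xseq_def)
    then show ?thesis using ba by (simp add: xm inner_diff_right)
  next
    case (enat j)
    have ij: "i < j" using mn(2) mi enat by simp
    have j1: "1 \<le> j" using ij i1 by simp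
    have xn: "xseq u d n = X j" "xseq u d (n + 1) = X (Suc j)"
      unfolding xseq_def X_def enat by (simp_all add: one_enat_def)
    have rSj: "rho d (Suc j) = rho d j * exp (- (d j)\<^sup>2)" using rho_Suc[OF j1] .
    have tSj: "tseq d (Suc j) = tseq d j + d j" using tseq_Suc[OF j1] .
    have ec: "inner (X (Suc j)) (X j) = inner (X (Suc j)) (X (Suc j))"
      unfolding Xin rSj tSj by (simp add: power2_eq_square mult_exp_exp[symmetric] del: mult_exp_exp)
    define p where "p = d i"
    define q where "q = d j"
    define T where "T = tseq d i"
    define U where "U = tseq d j"
    define R where "R = rho d i"
    define S where "S = rho d j"
    define D where "D = U - T - p"
    define y where "y = D + q"
    have p0: "p > 0" using d_pos i1 p_def by simp
    have q0: "q > 0" using d_pos j1 q_def by simp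
    have tm: "tseq d (Suc i) \<le> tseq d j" by (rule tseq_mono) (use d_pos ij in auto)
    have D0: "D \<ge> 0" using tm ij tS
      unfolding D_def U_def T_def p_def by simp
    have y0: "y > 0" using D0 q0 y_def by simp
    have rb: "1 / p + 64 * (p + D) \<le> 1 / q"
      using recip_bound[where d=d and i=i and j=j, OF d_pos d_rec i1] ij unfolding p_def q_def D_def U_def T_def by simp
    have qp: "q \<le> p"
    proof -
      have "1 / p \<le> 1 / q" using rb p0 D0 by simp
      then show ?thesis using p0 q0 by (simp add: field_simps)
    qed
    have "1 / p + 64 * y \<le> 1 / q" using rb qp unfolding y_def by simp
    then have "q * p * (1 / p + 64 * y) \<le> q * p * (1 / q)"
      using p0 q0 by (intro mult_left_mono) auto
    moreover have "q * p * (1 / p + 64 * y) = q * (1 + 64 * p * y)" using p0 by (simp add: field_simps)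
    moreover have "q * p * (1 / q) = p" using q0 by simp
    ultimately have c: "q * (1 + 64 * p * y) \<le> p" by simp
    have c2: "(2*q*y) * (1 + 32 * (2*p*y)) \<le> 2*p*y"
      using mult_right_mono[OF c, of "2*y"] y0 by (simp add: algebra_simps)
    have K: "1 \<le> exp (- (2*q*y)) * (2 - exp (- (2*p*y)))"
      by (rule key_real) (use c2 p0 q0 y0 in auto)
    define E where "E = R * S * exp (- p\<^sup>2 - D\<^sup>2)"
    have E0: "E > 0" unfolding E_def R_def S_def using rho_pos by simp
    have bc: "inner (X (Suc i)) (X j) = E"
    proof -
      have "inner (X (Suc i)) (X j) = R * S * (exp (- p\<^sup>2) * exp (- (T + p - U)\<^sup>2))"
        unfolding Xin rS tS R_def S_def p_def T_def U_def by (simp add: ac_simps del: mult_exp_exp)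
      also have "exp (- p\<^sup>2) * exp (- (T + p - U)\<^sup>2) = exp (- p\<^sup>2 - D\<^sup>2)"
        by (rule exp2) (simp add: D_def power2_eq_square algebra_simps)
      finally show ?thesis by (simp add: E_def)
    qed
    have be: "inner (X (Suc i)) (X (Suc j)) = E * exp (- (2*q*y))"
    proof -
      have "inner (X (Suc i)) (X (Suc j)) = R * S * (exp (- p\<^sup>2) * exp (- q\<^sup>2) * exp (- (T + p - (U + q))\<^sup>2))"
        unfolding Xin rS tS rSj tSj R_def S_def p_def q_def T_def U_def by (simp add: ac_simps del: mult_exp_exp)
      also have "exp (- p\<^sup>2) * exp (- q\<^sup>2) * exp (- (T + p - (U + q))\<^sup>2) = exp (- p\<^sup>2 - D\<^sup>2) * exp (- (2*q*y))"
        by (rule exp3) (simp add: D_def y_def power2_eq_square algebra_simps)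
      finally show ?thesis by (simp add: E_def)
    qed
    have ea: "inner (X (Suc j)) (X i) = E * exp (- (2*q*y) - 2*p*y)"
    proof -
      have "inner (X (Suc j)) (X i) = R * S * (exp (- q\<^sup>2) * exp (- (U + q - T)\<^sup>2))"
        unfolding Xin rSj tSj R_def S_def q_def T_def U_def by (simp add: ac_simps del: mult_exp_exp)
      also have "exp (- q\<^sup>2) * exp (- (U + q - T)\<^sup>2) = exp (- p\<^sup>2 - D\<^sup>2) * exp (- (2*q*y) - 2*p*y)"
        by (rule exp3') (simp add: D_def y_def power2_eq_square algebra_simps)
      finally show ?thesis by (simp add: E_def)
    qed
    have "E * 1 \<le> E * (exp (- (2*q*y)) * (2 - exp (- (2*p*y))))"
      using K E0 by (intro mult_left_mono) auto
    moreover have "exp (- (2*q*y) - 2*p*y) = exp (- (2*q*y)) * exp (- (2*p*y))"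
      by (rule exp2[symmetric]) simp
    ultimately have main: "E + E * exp (- (2*q*y) - 2*p*y) \<le> 2 * (E * exp (- (2*q*y)))"
      by (simp add: algebra_simps del: mult_exp_exp)
    have sym1: "inner (X j) (X (Suc i)) = E" using bc by (simp add: inner_commute)
    have sym2: "inner (X (Suc j)) (X (Suc i)) = E * exp (- (2*q*y))" using be by (simp add: inner_commute)
    have sym3: "inner (X j) (X (Suc j)) = inner (X (Suc j)) (X (Suc j))" using ec by (simp add: inner_commute)
    show ?thesis unfolding xm xn
      using main ba ec bc be ea sym1 sym2 sym3
      by (simp add: inner_diff_left inner_diff_right inner_commute[of "X i" "X (Suc i)"])
  qed
qed

end
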